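(* The permutation representation $\alpha_{H_n^n}$ of $S_n\times S_n$ is isomorphic to the regular representation of $S_n\times S_n$.
   Context: Permutations are composed as functions, and $\pi\in S_n$ is identified with the $n\times n$ permutation matrix whose $(i,j)$ entry is $1$ iff $i=\pi(j)$. For $A\in GL_n(\mathbb{Z}_2)$ let $\eta(A)$ (resp. $\theta(A)$) be the partition obtained by sorting the row sums (resp. column sums) of $A$, computed as integers, in weakly decreasing order. $H_n^n=\{A\in GL_n(\mathbb{Z}_2)\mid \eta(A)=\theta(A)=(n,n-1,\dots,2,1)\}$. The group $S_n\times S_n$ acts on $H_n^n$ by $(\pi,\sigma)\bullet A=\pi A\sigma^{-1}$, and $\alpha_{H_n^n}$ denotes the associated complex permutation representation (on the vector space with basis $H_n^n$). *)

theory Defs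
  imports Complex_Main "HOL-Combinatorics.Permutations"
begin

text \<open>An n x n matrix over Z_2 is a function nat => nat => bool (True = 1),
  required to vanish outside the index range {0..<n} x {0..<n}.\<close>

definition mats :: "nat \<Rightarrow> (nat \<Rightarrow> nat \<Rightarrow> bool) set" where
  "mats n = {A. \<forall>i j. (n \<le> i \<or> n \<le> j) \<longrightarrow> \<not> A i j}"

definition mmult :: "nat \<Rightarrow> (nat \<Rightarrow> nat \<Rightarrow> bool) \<Rightarrow> (nat \<Rightarrow> nat \<Rightarrow> bool) \<Rightarrow> (nat \<Rightarrow> nat \<Rightarrow> bool)" where
  "mmult n A B = (\<lambda>i j. odd (card {k. k < n \<and> A i k \<and> B k j}))"

definition idm :: "nat \<Rightarrow> nat \<Rightarrow> nat \<Rightarrow> bool" where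
  "idm n = (\<lambda>i j. i < n \<and> i = j)"

definition GL2 :: "nat \<Rightarrow> (nat \<Rightarrow> nat \<Rightarrow> bool) set" where
  "GL2 n = {A \<in> mats n. \<exists>B \<in> mats n. mmult n A B = idm n \<and> mmult n B A = idm n}"

definition row_sum :: "nat \<Rightarrow> (nat \<Rightarrow> nat \<Rightarrow> bool) \<Rightarrow> nat \<Rightarrow> nat" where
  "row_sum n A i = card {j. j < n \<and> A i j}"

definition col_sum :: "nat \<Rightarrow> (nat \<Rightarrow> nat \<Rightarrow> bool) \<Rightarrow> nat \<Rightarrow> nat" where
  "col_sum n A j = card {i. i < n \<and> A i j}"

definition eta :: "nat \<Rightarrow> (nat \<Rightarrow> nat \<Rightarrow> bool) \<Rightarrow> nat list" where
  "eta n A = rev (sort (map (row_sum n A) [0..<n]))"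

definition theta :: "nat \<Rightarrow> (nat \<Rightarrow> nat \<Rightarrow> bool) \<Rightarrow> nat list" where
  "theta n A = rev (sort (map (col_sum n A) [0..<n]))"

definition stair :: "nat \<Rightarrow> nat list" where
  "stair n = rev [1..<Suc n]"

definition Hnn :: "nat \<Rightarrow> (nat \<Rightarrow> nat \<Rightarrow> bool) set" where
  "Hnn n = {A \<in> GL2 n. eta n A = stair n \<and> theta n A = stair n}"

definition SnSn :: "nat \<Rightarrow> ((nat \<Rightarrow> nat) \<times> (nat \<Rightarrow> nat)) set" where
  "SnSn n = {(p, s). p permutes {0..<n} \<and> s permutes {0..<n}}"

text \<open>(pi, sigma) . A = P_pi A P_sigma^{-1}, where P_pi has (i,j) entry 1 iff i = pi j.
  Entrywise: (P_pi A P_sigma^{-1}) i j = A (pi^{-1} i) (sigma^{-1} j).\<close>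
definition mat_act :: "(nat \<Rightarrow> nat) \<times> (nat \<Rightarrow> nat) \<Rightarrow> (nat \<Rightarrow> nat \<Rightarrow> bool) \<Rightarrow> (nat \<Rightarrow> nat \<Rightarrow> bool)" where
  "mat_act g A = (\<lambda>i j. A (inv (fst g) i) (inv (snd g) j))"

definition left_mult :: "(nat \<Rightarrow> nat) \<times> (nat \<Rightarrow> nat) \<Rightarrow> (nat \<Rightarrow> nat) \<times> (nat \<Rightarrow> nat) \<Rightarrow> (nat \<Rightarrow> nat) \<times> (nat \<Rightarrow> nat)" where
  "left_mult g h = (fst g \<circ> fst h, snd g \<circ> snd h)"

text \<open>The complex vector space with basis X: functions X -> C (vanishing off X).\<close>
definition fspace :: "'a set \<Rightarrow> ('a \<Rightarrow> complex) set" where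
  "fspace X = {f. \<forall>x. x \<notin> X \<longrightarrow> f x = 0}"

text \<open>Permutation operator of g: linear extension of e_x |-> e_{g.x}.\<close>
definition perm_op :: "'a set \<Rightarrow> ('g \<Rightarrow> 'a \<Rightarrow> 'a) \<Rightarrow> 'g \<Rightarrow> ('a \<Rightarrow> complex) \<Rightarrow> ('a \<Rightarrow> complex)" where
  "perm_op X act g f = (\<lambda>y. \<Sum>x\<in>{x \<in> X. act g x = y}. f x)"

definition perm_rep_iso :: "'g set \<Rightarrow> 'a set \<Rightarrow> ('g \<Rightarrow> 'a \<Rightarrow> 'a) \<Rightarrow> 'b set \<Rightarrow> ('g \<Rightarrow> 'b \<Rightarrow> 'b) \<Rightarrow> bool" where
  "perm_rep_iso G X actX Y actY \<longleftrightarrow>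
     (\<exists>T. bij_betw T (fspace X) (fspace Y)
        \<and> (\<forall>f\<in>fspace X. \<forall>h\<in>fspace X. \<forall>c::complex.
              T (\<lambda>x. c * f x + h x) = (\<lambda>y. c * T f y + T h y))
        \<and> (\<forall>g\<in>G. \<forall>f\<in>fspace X. T (perm_op X actX g f) = perm_op Y actY g (T f)))"

end

theory Submission
  imports Defs
begin


lemma core:
  fixes A :: "nat \<Rightarrow> nat \<Rightarrow> bool"
  assumes "finite I" "finite J"
    "inj_on (\<lambda>i. card {j\<in>J. A i j}) I" "(\<lambda>i. card {j\<in>J. A i j}) ` I = {1..N}"
    "inj_on (\<lambda>j. card {i\<in>I. A i j}) J" "(\<lambda>j. card {i\<in>I. A i j}) ` J = {1..N}"
    "i \<in> I" "j \<in> J"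
  shows "A i j \<longleftrightarrow> N + 1 \<le> card {j\<in>J. A i j} + card {i\<in>I. A i j}"
  using assms
proof (induction N arbitrary: I J i j)
  case 0
  then show ?case by auto
next
  case (Suc M I J i j)
  define rs where "rs = (\<lambda>i. card {j\<in>J. A i j})"
  define cs where "cs = (\<lambda>j. card {i\<in>I. A i j})"
  have rsI: "inj_on rs I" "rs ` I = {1..Suc M}" and csJ: "inj_on cs J" "cs ` J = {1..Suc M}"
    using Suc.prems unfolding rs_def cs_def by auto
  have cardJ: "card J = Suc M" using card_image[OF csJ(1)] csJ(2) by simp
  have "Suc M \<in> rs ` I" using rsI(2) by simp
  then obtain i0 where i0: "i0 \<in> I" "rs i0 = Suc M" by (metis imageE)
  have "1 \<in> cs ` J" using csJ(2) by simp
  then obtain j0 where j0: "j0 \<in> J" "cs j0 = 1" by (metis imageE)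
  have "{j\<in>J. A i0 j} = J"
    using card_subset_eq[OF Suc.prems(2), of "{j\<in>J. A i0 j}"] i0(2) cardJ
    unfolding rs_def by auto
  then have rowfull: "\<And>j. j \<in> J \<Longrightarrow> A i0 j" by auto
  have "i0 \<in> {i\<in>I. A i j0}" using i0 rowfull j0 by auto
  moreover obtain x where "{i\<in>I. A i j0} = {x}" using j0(2) unfolding cs_def
    by (auto simp: card_1_singleton_iff)
  ultimately have colone: "{i\<in>I. A i j0} = {i0}" by auto
  define I' where "I' = I - {i0}"
  define J' where "J' = J - {j0}"
  have rs': "\<And>i. i \<in> I' \<Longrightarrow> card {j\<in>J'. A i j} = rs i"
  proof -
    fix i assume "i \<in> I'"
    then have "\<not> A i j0" using colone I'_def by auto
    then have "{j\<in>J'. A i j} = {j\<in>J. A i j}" using J'_def by auto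
    then show "card {j\<in>J'. A i j} = rs i" by (simp add: rs_def)
  qed
  have cs': "\<And>j. j \<in> J' \<Longrightarrow> card {i\<in>I'. A i j} = cs j - 1"
  proof -
    fix j assume "j \<in> J'"
    then have "A i0 j" using rowfull J'_def by auto
    then have "{i\<in>I'. A i j} = {i\<in>I. A i j} - {i0}" "i0 \<in> {i\<in>I. A i j}"
      using I'_def i0 by auto
    then show "card {i\<in>I'. A i j} = cs j - 1" using Suc.prems(1)
      by (simp add: cs_def)
  qed
  have csge: "\<And>j. j \<in> J \<Longrightarrow> 1 \<le> cs j \<and> cs j \<le> Suc M" using csJ(2) by auto
  have rsge: "\<And>i. i \<in> I \<Longrightarrow> 1 \<le> rs i \<and> rs i \<le> Suc M" using rsI(2) by auto
  have h1: "inj_on (\<lambda>i. card {j\<in>J'. A i j}) I'"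
  proof (rule inj_onI)
    fix x y assume xy: "x \<in> I'" "y \<in> I'" "card {j\<in>J'. A x j} = card {j\<in>J'. A y j}"
    then have "rs x = rs y" using rs' by simp
    then show "x = y" using rsI(1) xy I'_def by (auto dest: inj_onD)
  qed
  have h2: "(\<lambda>i. card {j\<in>J'. A i j}) ` I' = {1..M}"
  proof -
    have "(\<lambda>i. card {j\<in>J'. A i j}) ` I' = rs ` I'" using rs' by auto
    also have "\<dots> = rs ` I - {rs i0}" unfolding I'_def
      using rsI(1) i0(1) by (simp add: inj_on_image_set_diff)
    also have "\<dots> = {1..M}" using rsI(2) i0(2) by auto
    finally show ?thesis .
  qed
  have h3: "inj_on (\<lambda>j. card {i\<in>I'. A i j}) J'"
  proof (rule inj_onI)
    fix x y assume "x \<in> J'" "y \<in> J'" "card {i\<in>I'. A i x} = card {i\<in>I'. A i y}"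
    then have "cs x - 1 = cs y - 1" using cs' by simp
    moreover have "1 \<le> cs x" "1 \<le> cs y" using csge \<open>x \<in> J'\<close> \<open>y \<in> J'\<close> J'_def by auto
    ultimately have "cs x = cs y" by linarith
    then show "x = y" using csJ(1) \<open>x \<in> J'\<close> \<open>y \<in> J'\<close> J'_def by (auto dest: inj_onD)
  qed
  have h4: "(\<lambda>j. card {i\<in>I'. A i j}) ` J' = {1..M}"
  proof -
    have "(\<lambda>j. card {i\<in>I'. A i j}) ` J' = (\<lambda>x. x - 1) ` (cs ` J')" using cs' by (auto simp: image_image)
    also have "cs ` J' = cs ` J - {cs j0}" unfolding J'_def
      using csJ(1) j0(1) by (simp add: inj_on_image_set_diff)
    also have "\<dots> = {2..Suc M}" using csJ(2) j0(2) by auto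
    also have "(\<lambda>x. x - 1) ` {2..Suc M} = {1..M}"
    proof
      show "(\<lambda>x. x - 1) ` {2..Suc M} \<subseteq> {1..M}" by auto
      show "{1..M} \<subseteq> (\<lambda>x. x - 1) ` {2..Suc M}"
      proof
        fix x assume "x \<in> {1..M}"
        then have "Suc x \<in> {2..Suc M}" "x = Suc x - 1" by auto
        then show "x \<in> (\<lambda>x. x - 1) ` {2..Suc M}" by blast
      qed
    qed
    finally show ?thesis .
  qed
  have fI': "finite I'" "finite J'" using Suc.prems(1,2) I'_def J'_def by auto
  have goal: "A i j \<longleftrightarrow> Suc M + 1 \<le> rs i + cs j"
  proof (cases "i = i0")
    case True
    then show ?thesis using rowfull[OF Suc.prems(8)] i0(2) csge[OF Suc.prems(8)] by simp
  next
    case False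
    then have iI': "i \<in> I'" using I'_def Suc.prems(7) by auto
    have "rs i \<noteq> Suc M" using False i0 inj_onD[OF rsI(1), of i i0] Suc.prems(7) by auto
    then have rsi: "rs i \<le> M" using rsge[OF Suc.prems(7)] by auto
    show ?thesis
    proof (cases "j = j0")
      case True
      then have "\<not> A i j" using colone False Suc.prems(7) by auto
      then show ?thesis using True j0(2) rsi by simp
    next
      case False
      then have jJ': "j \<in> J'" using J'_def Suc.prems(8) by auto
      have "A i j \<longleftrightarrow> M + 1 \<le> card {j\<in>J'. A i j} + card {i\<in>I'. A i j}"
        by (rule Suc.IH[OF fI' h1 h2 h3 h4 iI' jJ'])
      then show ?thesis using rs'[OF iI'] cs'[OF jJ'] csge[OF Suc.prems(8)] by auto
    qed
  qed
  then show ?case by (simp add: rs_def cs_def)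
qed



lemma card_perm:
  fixes q :: "nat \<Rightarrow> nat"
  assumes q: "q permutes {0..<n}"
  shows "card {k. k<n \<and> P (q k)} = card {k. k<n \<and> P k}"
proof -
  have qlt: "(q x < n) = (x < n)" for x using permutes_in_image[OF q, of x] by simp
  have iqlt: "(inv q x < n) = (x < n)" for x using permutes_in_image[OF permutes_inv[OF q], of x] by simp
  have img: "q ` {k. k<n \<and> P (q k)} = {k. k<n \<and> P k}"
  proof
    show "q ` {k. k<n \<and> P (q k)} \<subseteq> {k. k<n \<and> P k}"
    proof
      fix y assume "y \<in> q ` {k. k<n \<and> P (q k)}"
      then obtain x where "x < n" "P (q x)" "y = q x" by blast
      then show "y \<in> {k. k<n \<and> P k}" using qlt[of x] by simp
    qed
    show "{k. k<n \<and> P k} \<subseteq> q ` {k. k<n \<and> P (q k)}"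
    proof
      fix k assume k: "k \<in> {k. k<n \<and> P k}"
      have e: "q (inv q k) = k" by (rule permutes_inverses(1)[OF q])
      show "k \<in> q ` {k. k<n \<and> P (q k)}"
      proof (rule image_eqI)
        show "k = q (inv q k)" using e by simp
        show "inv q k \<in> {k. k<n \<and> P (q k)}" using k e iqlt[of k] by simp
      qed
    qed
  qed
  have inj: "inj_on q {k. k<n \<and> P (q k)}"
    by (rule inj_on_subset[OF permutes_inj[OF q] subset_UNIV])
  have c: "card (q ` {k. k<n \<and> P (q k)}) = card {k. k<n \<and> P (q k)}" by (rule card_image[OF inj])
  show ?thesis using c unfolding img by simp
qed

lemma row_sum_act:
  assumes "p permutes {0..<n}" "s permutes {0..<n}"
  shows "row_sum n (mat_act (p,s) A) i = row_sum n A (inv p i)"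
  unfolding row_sum_def mat_act_def using card_perm[OF permutes_inv[OF assms(2)]] by simp

lemma col_sum_act:
  assumes "p permutes {0..<n}" "s permutes {0..<n}"
  shows "col_sum n (mat_act (p,s) A) j = col_sum n A (inv s j)"
  unfolding col_sum_def mat_act_def using card_perm[OF permutes_inv[OF assms(1)]] by simp

lemma mset_perm:
  fixes q :: "nat \<Rightarrow> nat"
  assumes q: "q permutes {0..<n}"
  shows "mset (map (f \<circ> q) [0..<n]) = mset (map f [0..<n])"
proof -
  have e: "mset (map q [0..<n]) = mset [0..<n]"
    unfolding mset_map mset_upt
    using image_mset_mset_set[OF permutes_inj_on[OF q], of "{0..<n}"] permutes_image[OF q] by simp
  have "mset (map (f \<circ> q) [0..<n]) = image_mset f (mset (map q [0..<n]))" by (simp add: multiset.map_comp)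
  also have "\<dots> = mset (map f [0..<n])" unfolding e by simp
  finally show ?thesis .
qed

lemma sort_eq: "mset xs = mset ys \<Longrightarrow> sort xs = sort ys"
  by (rule properties_for_sort) auto

lemma eta_act:
  assumes "p permutes {0..<n}" "s permutes {0..<n}"
  shows "eta n (mat_act (p,s) A) = eta n A"
proof -
  have m: "map (row_sum n (mat_act (p,s) A)) [0..<n] = map (row_sum n A \<circ> inv p) [0..<n]"
    using row_sum_act[OF assms] by simp
  show ?thesis unfolding eta_def m
    by (simp only: sort_eq[OF mset_perm[OF permutes_inv[OF assms(1)]]])
qed

lemma theta_act:
  assumes "p permutes {0..<n}" "s permutes {0..<n}"
  shows "theta n (mat_act (p,s) A) = theta n A"
proof -
  have m: "map (col_sum n (mat_act (p,s) A)) [0..<n] = map (col_sum n A \<circ> inv s) [0..<n]"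
    using col_sum_act[OF assms] by simp
  show ?thesis unfolding theta_def m
    by (simp only: sort_eq[OF mset_perm[OF permutes_inv[OF assms(2)]]])
qed

lemma mmult_act:
  assumes "p permutes {0..<n}" "s permutes {0..<n}" "q permutes {0..<n}"
  shows "mmult n (mat_act (p,s) A) (mat_act (s,q) B) = mat_act (p,q) (mmult n A B)"
proof (intro ext)
  fix i j
  have eq: "card {k. k<n \<and> A (inv p i) (inv s k) \<and> B (inv s k) (inv q j)} = card {k. k<n \<and> A (inv p i) k \<and> B k (inv q j)}"
    using card_perm[OF permutes_inv[OF assms(2)], of "\<lambda>k. A (inv p i) k \<and> B k (inv q j)"] by (simp only:)
  show "mmult n (mat_act (p,s) A) (mat_act (s,q) B) i j = mat_act (p,q) (mmult n A B) i j"
    unfolding mmult_def mat_act_def fst_conv snd_conv eq ..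
qed

lemma idm_act:
  assumes p: "p permutes {0..<n}"
  shows "mat_act (p,p) (idm n) = idm n"
proof (intro ext)
  fix i j
  have "(inv p i < n) = (i < n)" using permutes_in_image[OF permutes_inv[OF p]] by simp
  moreover have "(inv p i = inv p j) = (i = j)"
    using permutes_inj[OF permutes_inv[OF p]] by (auto dest: injD)
  ultimately show "mat_act (p,p) (idm n) i j = idm n i j"
    unfolding mat_act_def idm_def by simp
qed

lemma mats_act:
  assumes p: "p permutes {0..<n}" and s: "s permutes {0..<n}" and A: "A \<in> mats n"
  shows "mat_act (p,s) A \<in> mats n"
  unfolding mats_def mat_act_def
proof (intro CollectI allI impI)
  fix i j assume "n \<le> i \<or> n \<le> j"
  moreover have "n \<le> i \<Longrightarrow> n \<le> inv p i"
    using permutes_not_in[OF permutes_inv[OF p]] by simp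
  moreover have "n \<le> j \<Longrightarrow> n \<le> inv s j"
    using permutes_not_in[OF permutes_inv[OF s]] by simp
  ultimately show "\<not> A (inv (fst (p, s)) i) (inv (snd (p, s)) j)"
    using A unfolding mats_def by auto
qed

lemma GL2_act:
  assumes p: "p permutes {0..<n}" and s: "s permutes {0..<n}" and A: "A \<in> GL2 n"
  shows "mat_act (p,s) A \<in> GL2 n"
proof -
  obtain B where B: "B \<in> mats n" "mmult n A B = idm n" "mmult n B A = idm n"
    using A unfolding GL2_def by auto
  have e1: "mmult n (mat_act (p,s) A) (mat_act (s,p) B) = idm n"
    by (simp only: mmult_act[OF p s p] B(2) idm_act[OF p])
  have e2: "mmult n (mat_act (s,p) B) (mat_act (p,s) A) = idm n"
    by (simp only: mmult_act[OF s p s] B(3) idm_act[OF s])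
  have m1: "mat_act (s,p) B \<in> mats n" using mats_act[OF s p B(1)] .
  have "A \<in> mats n" using A by (simp add: GL2_def)
  then have m2: "mat_act (p,s) A \<in> mats n" using mats_act[OF p s] by simp
  show ?thesis unfolding GL2_def
    by (rule CollectI, rule conjI[OF m2], rule bexI[of _ "mat_act (s,p) B"]) (use e1 e2 m1 in auto)
qed

lemma Hnn_act:
  assumes p: "p permutes {0..<n}" and s: "s permutes {0..<n}" and A: "A \<in> Hnn n"
  shows "mat_act (p,s) A \<in> Hnn n"
proof -
  have h: "A \<in> GL2 n" "eta n A = stair n" "theta n A = stair n" using A by (simp_all add: Hnn_def)
  show ?thesis unfolding Hnn_def
    by (simp add: GL2_act[OF p s h(1)] eta_act[OF p s] theta_act[OF p s] h(2,3))
qed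



definition st :: "nat \<Rightarrow> nat \<Rightarrow> nat \<Rightarrow> bool" where
  "st n = (\<lambda>i j. i < n \<and> j \<le> i)"

definition stinv :: "nat \<Rightarrow> nat \<Rightarrow> nat \<Rightarrow> bool" where
  "stinv n = (\<lambda>i j. i < n \<and> j < n \<and> (j = i \<or> Suc j = i))"

lemma st_mats: "st n \<in> mats n" by (auto simp: mats_def st_def)
lemma stinv_mats: "stinv n \<in> mats n" by (auto simp: mats_def stinv_def)

lemma st_mult1: "mmult n (st n) (stinv n) = idm n"
proof (intro ext)
  fix i j :: nat
  have "{k. k < n \<and> st n i k \<and> stinv n k j} =
        (if i < n \<and> j < n then (if j = i then {i} else if j < i then {j, Suc j} else {}) else {})"
    by (auto simp: st_def stinv_def)
  then show "mmult n (st n) (stinv n) i j = idm n i j"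
    unfolding mmult_def idm_def by auto
qed

lemma st_mult2: "mmult n (stinv n) (st n) = idm n"
proof (intro ext)
  fix i j :: nat
  have "{k. k < n \<and> stinv n i k \<and> st n k j} =
        (if i < n \<and> j < n then (if j = i then {i} else if j < i then {i, i - 1} else {}) else {})"
    by (auto simp: st_def stinv_def)
  moreover have "0 < i \<Longrightarrow> card {i, i - 1} = 2" by simp
  ultimately show "mmult n (stinv n) (st n) i j = idm n i j"
    unfolding mmult_def idm_def by auto
qed

lemma st_GL2: "st n \<in> GL2 n"
  unfolding GL2_def using st_mats stinv_mats st_mult1 st_mult2 by blast

lemma row_st: "i < n \<Longrightarrow> row_sum n (st n) i = Suc i"
proof -
  assume "i < n"
  then have "{j. j < n \<and> st n i j} = {0..i}" by (auto simp: st_def)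
  then show ?thesis by (simp add: row_sum_def)
qed

lemma col_st: "j < n \<Longrightarrow> col_sum n (st n) j = n - j"
proof -
  assume "j < n"
  then have "{i. i < n \<and> st n i j} = {j..<n}" by (auto simp: st_def)
  then show ?thesis by (simp add: col_sum_def)
qed

lemma st_eta: "eta n (st n) = stair n"
proof -
  have "map (row_sum n (st n)) [0..<n] = map Suc [0..<n]" using row_st by simp
  also have "\<dots> = [1..<Suc n]" by (simp add: map_Suc_upt)
  finally have c: "map (row_sum n (st n)) [0..<n] = [1..<Suc n]" .
  show ?thesis by (simp only: eta_def stair_def c sorted_sort_id[OF sorted_upt])
qed

lemma st_theta: "theta n (st n) = stair n"
proof -
  have "map (col_sum n (st n)) [0..<n] = map (\<lambda>j. n - j) [0..<n]" using col_st by simp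
  also have "\<dots> = rev [1..<Suc n]"
    by (rule nth_equalityI) (auto simp: rev_nth nth_upt simp del: upt_Suc)
  finally have "map (col_sum n (st n)) [0..<n] = rev [1..<Suc n]" .
  moreover have "sort (rev [1..<Suc n]) = [1..<Suc n]"
    by (rule properties_for_sort) (simp_all del: upt_Suc)
  ultimately show ?thesis unfolding theta_def stair_def by (simp del: upt_Suc)
qed

lemma st_Hnn: "st n \<in> Hnn n"
  unfolding Hnn_def using st_GL2 st_eta st_theta by blast

lemma sums_from_stair:
  assumes "rev (sort (map f [0..<n])) = stair n"
  shows "inj_on f {0..<n}" "f ` {0..<n} = {1..n}"
proof -
  have "sort (map f [0..<n]) = [1..<Suc n]" using assms unfolding stair_def by simp
  then have m: "mset (map f [0..<n]) = mset [1..<Suc n]" by (metis mset_sort)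
  then have "distinct (map f [0..<n])" using mset_eq_imp_distinct_iff[OF m] by simp
  then show "inj_on f {0..<n}" by (simp add: distinct_map)
  have "set (map f [0..<n]) = set [1..<Suc n]" using m by (metis set_mset_mset)
  then show "f ` {0..<n} = {1..n}" by auto
qed

lemma perm_from:
  fixes f :: "nat \<Rightarrow> nat"
  assumes inj: "inj_on f {0..<n}" and sub: "\<And>i. i < n \<Longrightarrow> f i < n"
  shows "(\<lambda>i. if i < n then f i else i) permutes {0..<n}"
proof (rule bij_imp_permutes)
  let ?r = "\<lambda>i. if i < n then f i else i"
  have i2: "inj_on ?r {0..<n}" using inj by (auto simp: inj_on_def)
  have s2: "?r ` {0..<n} \<subseteq> {0..<n}" using sub by auto
  show "bij_betw ?r {0..<n} {0..<n}"
    unfolding bij_betw_def using i2 endo_inj_surj[OF _ s2 i2] by simp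
  show "\<And>x. x \<notin> {0..<n} \<Longrightarrow> ?r x = x" by simp
qed

lemma Phi_inj: "inj_on (\<lambda>g. mat_act g (st n)) (SnSn n)"
proof (rule inj_onI)
  fix g g' assume g: "g \<in> SnSn n" and g': "g' \<in> SnSn n"
    and eq: "mat_act g (st n) = mat_act g' (st n)"
  obtain p s where ps: "g = (p, s)" "p permutes {0..<n}" "s permutes {0..<n}" using g by (auto simp: SnSn_def)
  obtain p' s' where ps': "g' = (p', s')" "p' permutes {0..<n}" "s' permutes {0..<n}" using g' by (auto simp: SnSn_def)
  have ip: "inv p permutes {0..<n}" "inv p' permutes {0..<n}" "inv s permutes {0..<n}" "inv s' permutes {0..<n}"
    using ps ps' by (auto intro: permutes_inv)
  have "inv p = inv p'"
  proof
    fix i show "inv p i = inv p' i"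
    proof (cases "i < n")
      case True
      have a: "inv p i < n" "inv p' i < n"
        using permutes_in_image[OF ip(1), of i] permutes_in_image[OF ip(2), of i] True by auto
      have "row_sum n (mat_act (p,s) (st n)) i = row_sum n (mat_act (p',s') (st n)) i"
        using eq ps ps' by simp
      then have "row_sum n (st n) (inv p i) = row_sum n (st n) (inv p' i)"
        using row_sum_act[OF ps(2,3)] row_sum_act[OF ps'(2,3)] by simp
      then show ?thesis using row_st[OF a(1)] row_st[OF a(2)] by simp
    next
      case False
      then show ?thesis using permutes_not_in[OF ip(1), of i] permutes_not_in[OF ip(2), of i] by simp
    qed
  qed
  then have pp: "p = p'" using inv_inv_eq[OF permutes_bij[OF ps(2)]] inv_inv_eq[OF permutes_bij[OF ps'(2)]] by metis
  have "inv s = inv s'"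
  proof
    fix j show "inv s j = inv s' j"
    proof (cases "j < n")
      case True
      have a: "inv s j < n" "inv s' j < n"
        using permutes_in_image[OF ip(3), of j] permutes_in_image[OF ip(4), of j] True by auto
      have "col_sum n (mat_act (p,s) (st n)) j = col_sum n (mat_act (p',s') (st n)) j"
        using eq ps ps' by simp
      then have "col_sum n (st n) (inv s j) = col_sum n (st n) (inv s' j)"
        using col_sum_act[OF ps(2,3)] col_sum_act[OF ps'(2,3)] by simp
      then show ?thesis using col_st[OF a(1)] col_st[OF a(2)] a by simp
    next
      case False
      then show ?thesis using permutes_not_in[OF ip(3), of j] permutes_not_in[OF ip(4), of j] by simp
    qed
  qed
  then have "s = s'" using inv_inv_eq[OF permutes_bij[OF ps(3)]] inv_inv_eq[OF permutes_bij[OF ps'(3)]] by metis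
  then show "g = g'" using pp ps ps' by simp
qed

lemma Phi_surj:
  assumes A: "A \<in> Hnn n"
  shows "\<exists>g \<in> SnSn n. A = mat_act g (st n)"
proof -
  have Am: "A \<in> mats n" and e: "eta n A = stair n" and t: "theta n A = stair n"
    using A by (auto simp: Hnn_def GL2_def)
  define rs where "rs = row_sum n A"
  define cs where "cs = col_sum n A"
  have r1: "inj_on rs {0..<n}" "rs ` {0..<n} = {1..n}"
    using sums_from_stair[of "row_sum n A" n] e unfolding eta_def rs_def by auto
  have c1: "inj_on cs {0..<n}" "cs ` {0..<n} = {1..n}"
    using sums_from_stair[of "col_sum n A" n] t unfolding theta_def cs_def by auto
  have rse: "(\<lambda>i. card {j\<in>{0..<n}. A i j}) = rs"
    by (rule ext) (simp add: rs_def row_sum_def)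
  have cse: "(\<lambda>j. card {i\<in>{0..<n}. A i j}) = cs"
    by (rule ext) (simp add: cs_def col_sum_def)
  have rse': "\<And>i. card {j\<in>{0..<n}. A i j} = rs i" by (simp add: rs_def row_sum_def)
  have cse': "\<And>j. card {i\<in>{0..<n}. A i j} = cs j" by (simp add: cs_def col_sum_def)
  have key: "\<And>i j. i < n \<Longrightarrow> j < n \<Longrightarrow> A i j \<longleftrightarrow> n + 1 \<le> rs i + cs j"
  proof -
    fix i j assume ij: "i < n" "j < n"
    show "A i j \<longleftrightarrow> n + 1 \<le> rs i + cs j"
    proof -
      have "A i j \<longleftrightarrow> n + 1 \<le> card {j\<in>{0..<n}. A i j} + card {i\<in>{0..<n}. A i j}"
        apply (rule core)
               apply (simp_all only: rse cse)
        using r1 c1 ij by auto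
      then show ?thesis using rse' cse' by simp
    qed
  qed
  have rb: "\<And>i. i < n \<Longrightarrow> 1 \<le> rs i \<and> rs i \<le> n" using r1(2) by auto
  have cb: "\<And>j. j < n \<Longrightarrow> 1 \<le> cs j \<and> cs j \<le> n" using c1(2) by auto
  define r where "r = (\<lambda>i. if i < n then rs i - 1 else i)"
  define c where "c = (\<lambda>j. if j < n then n - cs j else j)"
  have rp: "r permutes {0..<n}" unfolding r_def
  proof (rule perm_from)
    show "inj_on (\<lambda>i. rs i - 1) {0..<n}"
    proof (rule inj_onI)
      fix x y assume xy: "x \<in> {0..<n}" "y \<in> {0..<n}" "rs x - 1 = rs y - 1"
      then have "rs x = rs y" using rb[of x] rb[of y] by auto
      then show "x = y" using r1(1) xy by (auto dest: inj_onD)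
    qed
    show "\<And>i. i < n \<Longrightarrow> rs i - 1 < n" using rb by fastforce
  qed
  have cp: "c permutes {0..<n}" unfolding c_def
  proof (rule perm_from)
    show "inj_on (\<lambda>j. n - cs j) {0..<n}"
    proof (rule inj_onI)
      fix x y assume xy: "x \<in> {0..<n}" "y \<in> {0..<n}" "n - cs x = n - cs y"
      then have "cs x = cs y" using cb[of x] cb[of y] by auto
      then show "x = y" using c1(1) xy by (auto dest: inj_onD)
    qed
    show "\<And>j. j < n \<Longrightarrow> n - cs j < n" using cb by fastforce
  qed
  have gS: "(inv r, inv c) \<in> SnSn n" using rp cp by (auto simp: SnSn_def intro: permutes_inv)
  have "mat_act (inv r, inv c) (st n) = (\<lambda>i j. st n (r i) (c j))"
    unfolding mat_act_def using inv_inv_eq[OF permutes_bij[OF rp]] inv_inv_eq[OF permutes_bij[OF cp]] by simp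
  also have "\<dots> = A"
  proof (intro ext)
    fix i j
    show "st n (r i) (c j) = A i j"
    proof (cases "i < n \<and> j < n")
      case True
      then show ?thesis using key[of i j] rb[of i] cb[of j] by (auto simp: st_def r_def c_def)
    next
      case False
      then have "\<not> A i j" using Am by (auto simp: mats_def)
      then show ?thesis using False by (auto simp: st_def r_def c_def)
    qed
  qed
  finally show ?thesis using gS by metis
qed

lemma abstract_iso:
  assumes bij: "bij_betw \<Phi> Y X"
  and closed: "\<And>g y. g \<in> G \<Longrightarrow> y \<in> Y \<Longrightarrow> actY g y \<in> Y"
  and equiv: "\<And>g y. g \<in> G \<Longrightarrow> y \<in> Y \<Longrightarrow> actX g (\<Phi> y) = \<Phi> (actY g y)"
  shows "perm_rep_iso G X actX Y actY"
proof -
  define T where "T = (\<lambda>(f::_ \<Rightarrow> complex) y. if y \<in> Y then f (\<Phi> y) else 0)"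
  have inj: "inj_on \<Phi> Y" and img: "\<Phi> ` Y = X" using bij by (auto simp: bij_betw_def)
  have "bij_betw T (fspace X) (fspace Y)"
  proof (rule bij_betw_imageI)
    show "inj_on T (fspace X)"
    proof (rule inj_onI)
      fix f f' assume f: "f \<in> fspace X" and f': "f' \<in> fspace X" and eq: "T f = T f'"
      show "f = f'"
      proof
        fix x show "f x = f' x"
        proof (cases "x \<in> X")
          case True
          then obtain y where "y \<in> Y" "x = \<Phi> y" using img by auto
          then show ?thesis using fun_cong[OF eq, of y] by (simp add: T_def)
        next
          case False then show ?thesis using f f' by (simp add: fspace_def)
        qed
      qed
    qed
    show "T ` fspace X = fspace Y"
    proof
      show "T ` fspace X \<subseteq> fspace Y" by (auto simp: T_def fspace_def)
      show "fspace Y \<subseteq> T ` fspace X"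
      proof
        fix u assume u: "u \<in> fspace Y"
        define f where "f = (\<lambda>x. if x \<in> X then u (inv_into Y \<Phi> x) else 0)"
        have "f \<in> fspace X" by (simp add: f_def fspace_def)
        moreover have "T f = u"
        proof
          fix y show "T f y = u y"
            using u inj img by (auto simp: T_def f_def fspace_def)
        qed
        ultimately show "u \<in> T ` fspace X" by blast
      qed
    qed
  qed
  moreover have "\<forall>f\<in>fspace X. \<forall>h\<in>fspace X. \<forall>c::complex.
              T (\<lambda>x. c * f x + h x) = (\<lambda>y. c * T f y + T h y)"
    by (auto simp: T_def)
  moreover have "\<forall>g\<in>G. \<forall>f\<in>fspace X. T (perm_op X actX g f) = perm_op Y actY g (T f)"
  proof (intro ballI ext)
    fix g f y assume g: "g \<in> G" and f: "f \<in> fspace X"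
    show "T (perm_op X actX g f) y = perm_op Y actY g (T f) y"
    proof (cases "y \<in> Y")
      case True
      have b: "bij_betw \<Phi> {k \<in> Y. actY g k = y} {x \<in> X. actX g x = \<Phi> y}"
      proof (rule bij_betw_imageI)
        show "inj_on \<Phi> {k \<in> Y. actY g k = y}" using inj by (auto intro: inj_on_subset)
        show "\<Phi> ` {k \<in> Y. actY g k = y} = {x \<in> X. actX g x = \<Phi> y}"
        proof
          show "\<Phi> ` {k \<in> Y. actY g k = y} \<subseteq> {x \<in> X. actX g x = \<Phi> y}"
            using img equiv g by auto
          show "{x \<in> X. actX g x = \<Phi> y} \<subseteq> \<Phi> ` {k \<in> Y. actY g k = y}"
          proof
            fix x assume x: "x \<in> {x \<in> X. actX g x = \<Phi> y}"
            then obtain k where k: "k \<in> Y" "x = \<Phi> k" using img by auto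
            have "\<Phi> (actY g k) = \<Phi> y" using x k equiv g by auto
            then have "actY g k = y" using inj closed[OF g k(1)] True by (auto dest: inj_onD)
            then show "x \<in> \<Phi> ` {k \<in> Y. actY g k = y}" using k by auto
          qed
        qed
      qed
      have "perm_op Y actY g (T f) y = (\<Sum>k\<in>{k \<in> Y. actY g k = y}. f (\<Phi> k))"
        unfolding perm_op_def T_def by (rule sum.cong) auto
      also have "\<dots> = (\<Sum>x\<in>{x \<in> X. actX g x = \<Phi> y}. f x)"
        by (rule sum.reindex_bij_betw[OF b])
      finally show ?thesis using True by (simp add: T_def perm_op_def)
    next
      case False
      then have e: "{k \<in> Y. actY g k = y} = {}" using closed[OF g] by auto
      have "perm_op Y actY g (T f) y = 0" unfolding perm_op_def e by simp
      moreover have "T (perm_op X actX g f) y = 0" using False by (simp add: T_def)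
      ultimately show ?thesis by simp
    qed
  qed
  ultimately show ?thesis unfolding perm_rep_iso_def by blast
qed

theorem mainTheorem2:
  fixes n :: nat
  shows "perm_rep_iso (SnSn n) (Hnn n) mat_act (SnSn n) left_mult"
proof (rule abstract_iso[where \<Phi> = "\<lambda>g. mat_act g (st n)"])
  show "bij_betw (\<lambda>g. mat_act g (st n)) (SnSn n) (Hnn n)"
    unfolding bij_betw_def
  proof
    show "inj_on (\<lambda>g. mat_act g (st n)) (SnSn n)" by (rule Phi_inj)
    show "(\<lambda>g. mat_act g (st n)) ` SnSn n = Hnn n"
    proof
      show "(\<lambda>g. mat_act g (st n)) ` SnSn n \<subseteq> Hnn n"
        using Hnn_act st_Hnn by (auto simp: SnSn_def)
      show "Hnn n \<subseteq> (\<lambda>g. mat_act g (st n)) ` SnSn n"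
        using Phi_surj by blast
    qed
  qed
  show "\<And>g y. g \<in> SnSn n \<Longrightarrow> y \<in> SnSn n \<Longrightarrow> left_mult g y \<in> SnSn n"
    by (auto simp: SnSn_def left_mult_def intro: permutes_compose)
  show "\<And>g y. g \<in> SnSn n \<Longrightarrow> y \<in> SnSn n \<Longrightarrow>
          mat_act g (mat_act y (st n)) = mat_act (left_mult g y) (st n)"
  proof -
    fix g y assume g: "g \<in> SnSn n" and y: "y \<in> SnSn n"
    obtain p s where "g = (p,s)" "p permutes {0..<n}" "s permutes {0..<n}" using g by (auto simp: SnSn_def)
    moreover obtain p' s' where "y = (p',s')" "p' permutes {0..<n}" "s' permutes {0..<n}" using y by (auto simp: SnSn_def)
    ultimately show "mat_act g (mat_act y (st n)) = mat_act (left_mult g y) (st n)"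
      unfolding mat_act_def left_mult_def
      by (simp add: o_inv_distrib permutes_bij)
  qed
qed

end
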